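(* Let $G$ be a non-regular simple graph on $n$ vertices such that $F_k(G)$ is regular for some integer $k$ with $2\le k\le n-2$. Then $G$ is isomorphic to the star $K_{1,n-1}$ or to its complement $\overline{K_{1,n-1}}$, and in both cases $k=n/2$.
   Context: For a simple graph $G=(V,E)$ on $n$ vertices and an integer $1\le k<n$, the $k$-token graph $F_k(G)$ is the graph whose vertices are all $k$-element subsets of $V$, two such subsets $A,B$ being adjacent whenever their symmetric difference $A\triangle B$ is a pair $\{a,b\}$ with $a$ adjacent to $b$ in $G$. *)

theory Defs
  imports Main
begin

definition simple_graph :: "'a set \<Rightarrow> ('a \<Rightarrow> 'a \<Rightarrow> bool) \<Rightarrow> bool" where
  "simple_graph V E \<longleftrightarrow> finite V \<and> (\<forall>x y. E x y \<longrightarrow> x \<in> V \<and> y \<in> V)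
     \<and> (\<forall>x y. E x y \<longrightarrow> E y x) \<and> (\<forall>x. \<not> E x x)"

definition degree :: "'a set \<Rightarrow> ('a \<Rightarrow> 'a \<Rightarrow> bool) \<Rightarrow> 'a \<Rightarrow> nat" where
  "degree V E v = card {u \<in> V. E v u}"

definition regular :: "'a set \<Rightarrow> ('a \<Rightarrow> 'a \<Rightarrow> bool) \<Rightarrow> bool" where
  "regular V E \<longleftrightarrow> (\<exists>d. \<forall>v \<in> V. degree V E v = d)"

text \<open>The k-token graph F_k(G): vertices are the k-subsets of V; A, B adjacent iff
  their symmetric difference is a pair {a,b} with a adjacent to b in G.\<close>
definition token_vertices :: "'a set \<Rightarrow> nat \<Rightarrow> 'a set set" where
  "token_vertices V k = {A. A \<subseteq> V \<and> card A = k}"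

definition token_adj :: "('a \<Rightarrow> 'a \<Rightarrow> bool) \<Rightarrow> 'a set \<Rightarrow> 'a set \<Rightarrow> bool" where
  "token_adj E A B \<longleftrightarrow> (\<exists>a b. (A - B) \<union> (B - A) = {a, b} \<and> E a b)"

definition graph_iso :: "'a set \<Rightarrow> ('a \<Rightarrow> 'a \<Rightarrow> bool) \<Rightarrow> 'b set \<Rightarrow> ('b \<Rightarrow> 'b \<Rightarrow> bool) \<Rightarrow> bool" where
  "graph_iso V E W F \<longleftrightarrow> (\<exists>f. bij_betw f V W \<and> (\<forall>x \<in> V. \<forall>y \<in> V. E x y \<longleftrightarrow> F (f x) (f y)))"

definition compl_graph :: "'a set \<Rightarrow> ('a \<Rightarrow> 'a \<Rightarrow> bool) \<Rightarrow> 'a \<Rightarrow> 'a \<Rightarrow> bool" where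
  "compl_graph V E x y \<longleftrightarrow> x \<in> V \<and> y \<in> V \<and> x \<noteq> y \<and> \<not> E x y"

definition star_vertices :: "nat \<Rightarrow> nat set" where
  "star_vertices n = {0..<n}"

definition star_edges :: "nat \<Rightarrow> nat \<Rightarrow> nat \<Rightarrow> bool" where
  "star_edges n x y \<longleftrightarrow> x < n \<and> y < n \<and> x \<noteq> y \<and> (x = 0 \<or> y = 0)"

end

theory Submission
  imports Defs
begin


lemma bij_center:
  assumes "finite V" "card V = n" "c \<in> V"
  shows "\<exists>f. bij_betw f V {0..<n} \<and> f c = 0"
proof -
  have "card (V - {c}) = card {1..<n}" using assms by auto
  moreover have "finite (V - {c})" "finite {1..<n}" using assms by auto
  ultimately have "\<exists>g. bij_betw g (V - {c}) {1..<n}"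
    using finite_same_card_bij[of "V - {c}" "{1..<n}"] by simp
  then obtain g where g: "bij_betw g (V - {c}) {1..<n}" by (elim exE)
  let ?f = "g(c := 0)"
  have "bij_betw ?f (V - {c}) {1..<n} = bij_betw g (V - {c}) {1..<n}"
    by (rule bij_betw_cong) auto
  with g have "bij_betw ?f (V - {c}) {1..<n}" by simp
  then have "bij_betw ?f ((V - {c}) \<union> {c}) ({1..<n} \<union> {?f c})"
    by (intro notIn_Un_bij_betw) auto
  moreover have "(V - {c}) \<union> {c} = V" using assms by auto
  moreover have "n > 0" using assms card_gt_0_iff by blast 
  then have "{1..<n} \<union> {?f c} = {0..<n}" by auto
  ultimately show ?thesis by (intro exI[of _ ?f]) auto
qed

lemma iso_star:
  assumes "finite V" "card V = n" "c \<in> V"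
    and E: "\<forall>u\<in>V. \<forall>v\<in>V. E u v \<longleftrightarrow> u\<noteq>v \<and> (u=c \<or> v=c)"
  shows "graph_iso V E (star_vertices n) (star_edges n)"
proof -
  obtain f where f: "bij_betw f V {0..<n}" "f c = 0" using bij_center[OF assms(1-3)] by blast
  have inj: "inj_on f V" using f(1) by (rule bij_betw_imp_inj_on)
  have lt: "\<And>u. u \<in> V \<Longrightarrow> f u < n" using f(1) unfolding bij_betw_def by auto
  have eq: "\<And>u v. u \<in> V \<Longrightarrow> v \<in> V \<Longrightarrow> f u = f v \<longleftrightarrow> u = v"
    using inj unfolding inj_on_def by blast
  have z: "\<And>u. u \<in> V \<Longrightarrow> f u = 0 \<longleftrightarrow> u = c" using eq[of _ c] f(2) assms(3) by simp
  have "\<forall>x\<in>V. \<forall>y\<in>V. E x y \<longleftrightarrow> star_edges n (f x) (f y)"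
    unfolding star_edges_def using E lt z eq by simp
  then show ?thesis unfolding graph_iso_def star_vertices_def using f by blast
qed

lemma iso_cstar:
  assumes "finite V" "card V = n" "c \<in> V"
    and E: "\<forall>u\<in>V. \<forall>v\<in>V. E u v \<longleftrightarrow> u\<noteq>v \<and> u\<noteq>c \<and> v\<noteq>c"
  shows "graph_iso V E (star_vertices n) (compl_graph (star_vertices n) (star_edges n))"
proof -
  obtain f where f: "bij_betw f V {0..<n}" "f c = 0" using bij_center[OF assms(1-3)] by blast
  have inj: "inj_on f V" using f(1) by (rule bij_betw_imp_inj_on)
  have lt: "\<And>u. u \<in> V \<Longrightarrow> f u < n" using f(1) unfolding bij_betw_def by auto
  have eq: "\<And>u v. u \<in> V \<Longrightarrow> v \<in> V \<Longrightarrow> f u = f v \<longleftrightarrow> u = v"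
    using inj unfolding inj_on_def by blast
  have z: "\<And>u. u \<in> V \<Longrightarrow> f u = 0 \<longleftrightarrow> u = c" using eq[of _ c] f(2) assms(3) by simp
  have "\<forall>x\<in>V. \<forall>y\<in>V. E x y \<longleftrightarrow> compl_graph (star_vertices n) (star_edges n) (f x) (f y)"
    unfolding star_edges_def compl_graph_def star_vertices_def using E lt z eq by auto
  then show ?thesis unfolding graph_iso_def star_vertices_def using f by blast
qed



definition gi :: "('a \<Rightarrow> 'a \<Rightarrow> bool) \<Rightarrow> 'a \<Rightarrow> 'a \<Rightarrow> int" where
  "gi E a b = (if E a b then 1 else 0)"

definition cutv :: "'a set \<Rightarrow> ('a \<Rightarrow> 'a \<Rightarrow> bool) \<Rightarrow> 'a set \<Rightarrow> int" where
  "cutv V E A = (\<Sum>a\<in>A. \<Sum>b\<in>V-A. gi E a b)"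

lemma card_gi: "finite S \<Longrightarrow> int (card {b\<in>S. E a b}) = (\<Sum>b\<in>S. gi E a b)"
proof -
  assume S: "finite S"
  have "int (card {b\<in>S. E a b}) = (\<Sum>b\<in>{b\<in>S. E a b}. 1)" by simp
  also have "\<dots> = (\<Sum>b\<in>S. if E a b then 1 else 0)" using S by (rule sum.inter_filter)
  finally show ?thesis unfolding gi_def .
qed

lemma token_degree:
  assumes sg: "simple_graph V E" and A: "A \<subseteq> V" "card A = k"
  shows "int (degree (token_vertices V k) (token_adj E) A) = cutv V E A"
proof -
  have fin: "finite V" and sym: "\<And>x y. E x y \<Longrightarrow> E y x" and irr: "\<And>x. \<not> E x x"
    and inV: "\<And>x y. E x y \<Longrightarrow> x \<in> V \<and> y \<in> V"
    using sg unfolding simple_graph_def by auto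
  have finA: "finite A" using A fin finite_subset by blast
  define N where "N = {B \<in> token_vertices V k. token_adj E A B}"
  define P where "P = Sigma A (\<lambda>a. {b\<in>V-A. E a b})"
  define \<phi> where "\<phi> = (\<lambda>(a,b). insert b (A - {a}))"
  have bij: "bij_betw \<phi> P N"
    unfolding bij_betw_def
  proof
    show "inj_on \<phi> P"
    proof (rule inj_onI)
      fix p q assume p: "p \<in> P" and q: "q \<in> P" and e: "\<phi> p = \<phi> q"
      obtain a b where pab: "p = (a,b)" by (cases p)
      obtain a' b' where qab: "q = (a',b')" by (cases q)
      have h: "a \<in> A" "b \<in> V" "b \<notin> A" "a' \<in> A" "b' \<in> V" "b' \<notin> A"
        using p q pab qab unfolding P_def by auto
      have e2: "insert b (A - {a}) = insert b' (A - {a'})" using e pab qab unfolding \<phi>_def by simp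
      have "b = b'" using e2 h by blast
      moreover have "a = a'"
      proof (rule ccontr)
        assume "a \<noteq> a'"
        then have "a \<in> insert b' (A - {a'})" using h by auto
        moreover have "a \<notin> insert b (A - {a})" using h by auto
        ultimately show False using e2 by simp
      qed
      ultimately show "p = q" using pab qab by simp
    qed
  next
    show "\<phi> ` P = N"
    proof
      show "\<phi> ` P \<subseteq> N"
      proof
        fix B assume "B \<in> \<phi> ` P"
        then obtain a b where ab: "a \<in> A" "b \<in> V" "b \<notin> A" "E a b" and B: "B = insert b (A - {a})"
          unfolding P_def \<phi>_def by auto
        have "k > 0" using ab finA A card_gt_0_iff by blast
        then have "card B = k" using B ab finA A by (simp add: card_Diff_singleton)
        moreover have "B \<subseteq> V" using B ab A by auto
        moreover have "(A - B) \<union> (B - A) = {a, b}" using B ab by auto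
        ultimately show "B \<in> N" unfolding N_def token_vertices_def token_adj_def using ab by blast
      qed
    next
      show "N \<subseteq> \<phi> ` P"
      proof
        fix B assume "B \<in> N"
        then obtain a b where B: "B \<subseteq> V" "card B = k" and sd: "(A - B) \<union> (B - A) = {a, b}" and e: "E a b"
          unfolding N_def token_vertices_def token_adj_def by auto
        have ne: "a \<noteq> b" using e irr by auto
        have finB: "finite B" using B fin finite_subset by blast
        have cc: "card (A - B) = card (B - A)"
        proof -
          have "card (A - B) = card A - card (A \<inter> B)" using finA by (metis card_Diff_subset_Int finite_Int)
          moreover have "card (B - A) = card B - card (A \<inter> B)" using finB
            by (metis card_Diff_subset_Int finite_Int inf_commute)
          ultimately show ?thesis using A B by simp
        qed
        have "card ((A - B) \<union> (B - A)) = 2" using sd ne by simp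
        moreover have "card ((A - B) \<union> (B - A)) = card (A - B) + card (B - A)"
          using finA finB by (intro card_Un_disjoint) auto
        ultimately have c1: "card (A - B) = 1" "card (B - A) = 1" using cc by auto
        then obtain x y where xy0: "A - B = {x}" "B - A = {y}" by (meson card_1_singletonE)
        then have "{x, y} = {a, b}" using sd by auto
        then have "(x = a \<and> y = b) \<or> (x = b \<and> y = a)" by (metis doubleton_eq_iff)
        then have "E x y" using e sym by auto
        then obtain x y where xy: "x \<in> A - B" "y \<in> B - A" "E x y" "(A - B) \<union> (B - A) = {x, y}"
          using xy0 by auto
        have "A - B = {x}" "B - A = {y}" using xy by auto
        then have "B = insert y (A - {x})" by blast
        moreover have "(x, y) \<in> P" using xy B unfolding P_def by auto
        ultimately show "B \<in> \<phi> ` P" unfolding \<phi>_def by force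
      qed
    qed
  qed
  have "degree (token_vertices V k) (token_adj E) A = card N"
    unfolding degree_def N_def by simp
  also have "\<dots> = card P" using bij by (simp add: bij_betw_same_card)
  also have "\<dots> = (\<Sum>a\<in>A. card {b\<in>V-A. E a b})" unfolding P_def
    using finA fin by (subst card_SigmaI) auto
  finally have "int (degree (token_vertices V k) (token_adj E) A) = (\<Sum>a\<in>A. int (card {b\<in>V-A. E a b}))"
    by simp
  also have "\<dots> = cutv V E A" unfolding cutv_def
    using card_gi[of "V - A" E] fin by (intro sum.cong) auto
  finally show ?thesis .
qed



lemma gi_sym: "simple_graph V E \<Longrightarrow> gi E a b = gi E b a"
  unfolding simple_graph_def gi_def by metis

lemma gi_irr: "simple_graph V E \<Longrightarrow> gi E a a = 0"
  unfolding simple_graph_def gi_def by simp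

lemma gi_01: "gi E a b = 0 \<or> gi E a b = 1"
  unfolding gi_def by simp

lemma cut_insert:
  assumes sg: "simple_graph V E" and S: "S \<subseteq> V" and x: "x \<in> V" "x \<notin> S"
  shows "cutv V E (insert x S) = cutv V E S + (\<Sum>b\<in>V. gi E x b) - 2 * (\<Sum>s\<in>S. gi E x s)"
proof -
  have fin: "finite V" using sg unfolding simple_graph_def by auto
  have finS: "finite S" using S fin finite_subset by blast
  have VS: "V - insert x S = (V - S) - {x}" by auto
  have xVS: "x \<in> V - S" using x by auto
  have 1: "\<And>a. (\<Sum>b\<in>(V - S) - {x}. gi E a b) = (\<Sum>b\<in>V - S. gi E a b) - gi E a x"
    using fin xVS by (simp add: sum_diff1)
  have "cutv V E (insert x S) = (\<Sum>b\<in>(V-S)-{x}. gi E x b) + (\<Sum>a\<in>S. \<Sum>b\<in>(V-S)-{x}. gi E a b)"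
    unfolding cutv_def VS using finS x by (simp add: sum.insert)
  also have "(\<Sum>a\<in>S. \<Sum>b\<in>(V-S)-{x}. gi E a b) = (\<Sum>a\<in>S. (\<Sum>b\<in>V - S. gi E a b) - gi E a x)"
    using 1 by simp
  also have "\<dots> = cutv V E S - (\<Sum>a\<in>S. gi E a x)" unfolding cutv_def by (simp add: sum_subtractf)
  also have "(\<Sum>a\<in>S. gi E a x) = (\<Sum>s\<in>S. gi E x s)" using gi_sym[OF sg] by simp
  also have "(\<Sum>b\<in>(V-S)-{x}. gi E x b) = (\<Sum>b\<in>V - S. gi E x b)" using 1 gi_irr[OF sg] by simp
  also have "\<dots> = (\<Sum>b\<in>V. gi E x b) - (\<Sum>s\<in>S. gi E x s)" using fin S by (simp add: sum_diff)
  finally show ?thesis by simp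
qed



lemma cut2:
  assumes sg: "simple_graph V E" and R: "R \<subseteq> V" and pq: "p \<in> V" "q \<in> V" "p \<notin> R" "q \<notin> R" "p \<noteq> q"
  shows "cutv V E (insert q (insert p R)) = cutv V E R + (\<Sum>b\<in>V. gi E p b) - 2 * (\<Sum>s\<in>R. gi E p s)
     + (\<Sum>b\<in>V. gi E q b) - 2 * ((\<Sum>s\<in>R. gi E q s) + gi E q p)"
proof -
  have fin: "finite V" using sg unfolding simple_graph_def by auto
  have finR: "finite R" using R fin finite_subset by blast
  have "cutv V E (insert q (insert p R)) = cutv V E (insert p R) + (\<Sum>b\<in>V. gi E q b) - 2 * (\<Sum>s\<in>insert p R. gi E q s)"
    using pq R by (intro cut_insert[OF sg]) auto
  moreover have "(\<Sum>s\<in>insert p R. gi E q s) = gi E q p + (\<Sum>s\<in>R. gi E q s)" using finR pq by simp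
  moreover have "cutv V E (insert p R) = cutv V E R + (\<Sum>b\<in>V. gi E p b) - 2 * (\<Sum>s\<in>R. gi E p s)"
    using pq R by (intro cut_insert[OF sg]) auto
  ultimately show ?thesis by simp
qed

lemma swapB:
  assumes sg: "simple_graph V E" and cV: "card V = n" and k: "2 \<le> k" "k \<le> n - 2"
    and cc: "\<And>A. A \<subseteq> V \<Longrightarrow> card A = k \<Longrightarrow> cutv V E A = c"
    and inV: "x \<in> V" "y \<in> V" "w \<in> V" "w' \<in> V"
    and d: "x \<noteq> y" "x \<noteq> w" "x \<noteq> w'" "y \<noteq> w" "y \<noteq> w'" "w \<noteq> w'"
  shows "gi E x w - gi E y w = gi E x w' - gi E y w'"
proof -
  have fin: "finite V" using sg unfolding simple_graph_def by auto
  have "card {x,y,w,w'} = 4" using d by simp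
  moreover have "{x,y,w,w'} \<subseteq> V" using inV by auto
  ultimately have "card (V - {x,y,w,w'}) = n - 4" using cV fin by (simp add: card_Diff_subset)
  then have "k - 2 \<le> card (V - {x,y,w,w'})" using k by linarith
  then obtain R where R: "R \<subseteq> V - {x,y,w,w'}" "card R = k - 2" "finite R"
    by (rule obtain_subset_with_card_n)
  have RV: "R \<subseteq> V" using R by auto
  have ck: "\<And>p q. p \<notin> R \<Longrightarrow> q \<notin> R \<Longrightarrow> p \<noteq> q \<Longrightarrow> card (insert q (insert p R)) = k"
    using R k by simp
  have sub: "\<And>p q. p \<in> V \<Longrightarrow> q \<in> V \<Longrightarrow> insert q (insert p R) \<subseteq> V" using RV by auto
  have nR: "x \<notin> R" "y \<notin> R" "w \<notin> R" "w' \<notin> R" using R by auto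
  have e1: "cutv V E (insert x (insert w R)) = c" using cc sub ck nR inV d by simp
  have e2: "cutv V E (insert y (insert w R)) = c" using cc sub ck nR inV d by simp
  have e3: "cutv V E (insert x (insert w' R)) = c" using cc sub ck nR inV d by simp
  have e4: "cutv V E (insert y (insert w' R)) = c" using cc sub ck nR inV d by simp
  note f1 = cut2[OF sg RV, of w x] and f2 = cut2[OF sg RV, of w y]
    and f3 = cut2[OF sg RV, of w' x] and f4 = cut2[OF sg RV, of w' y]
  show ?thesis using e1 e2 e3 e4 f1 f2 f3 f4 inV d nR by simp
qed



lemma pairL:
  assumes sg: "simple_graph V E" and cV: "card V = n" and k: "2 \<le> k" "k \<le> n - 2"
    and cc: "\<And>A. A \<subseteq> V \<Longrightarrow> card A = k \<Longrightarrow> cutv V E A = c"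
    and xy: "x \<in> V" "y \<in> V" "x \<noteq> y"
  shows "\<exists>t. (\<forall>w\<in>V-{x,y}. gi E x w - gi E y w = t)
     \<and> (\<Sum>b\<in>V. gi E x b) - (\<Sum>b\<in>V. gi E y b) = (int n - 2) * t
     \<and> (\<Sum>b\<in>V. gi E x b) - (\<Sum>b\<in>V. gi E y b) = 2 * (int k - 1) * t"
proof -
  have fin: "finite V" using sg unfolding simple_graph_def by auto
  define W where "W = V - {x,y}"
  have finW: "finite W" using fin W_def by auto
  have c2: "card {x,y} = 2" using xy by auto
  have "card (V - {x,y}) = card V - card {x,y}" by (rule card_Diff_subset) (use xy in auto)
  then have cW: "card W = n - 2" unfolding W_def cV c2 .
  have n4: "n \<ge> 4" using k by linarith
  then have "card W > 0" using cW by linarith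
  then have "W \<noteq> {}" by auto
  then obtain w0 where w0: "w0 \<in> W" by blast
  define t where "t = gi E x w0 - gi E y w0"
  have tw: "\<forall>w\<in>W. gi E x w - gi E y w = t"
  proof
    fix w assume w: "w \<in> W"
    show "gi E x w - gi E y w = t"
    proof (cases "w = w0")
      case True then show ?thesis unfolding t_def by simp
    next
      case False
      then show ?thesis unfolding t_def using w w0 xy W_def
        by (intro swapB[OF sg cV k cc]) auto
    qed
  qed
  have V: "V = insert x (insert y W)" using xy W_def by auto
  have "(\<Sum>b\<in>V. gi E x b) - (\<Sum>b\<in>V. gi E y b) = (\<Sum>b\<in>V. gi E x b - gi E y b)"
    by (simp add: sum_subtractf)
  also have "\<dots> = (gi E x x - gi E y x) + (gi E x y - gi E y y) + (\<Sum>b\<in>W. gi E x b - gi E y b)"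
    unfolding V using finW xy W_def by simp
  also have "\<dots> = (\<Sum>b\<in>W. t)" using tw gi_irr[OF sg] gi_sym[OF sg, of x y] by simp
  also have "\<dots> = int (n - 2) * t" using cW by simp
  also have "int (n - 2) = int n - 2" using n4 by simp
  finally have A: "(\<Sum>b\<in>V. gi E x b) - (\<Sum>b\<in>V. gi E y b) = (int n - 2) * t" .
  have "card (W - {w0}) = n - 3" using cW w0 finW by simp
  then have "k - 2 \<le> card (W - {w0})" using k by linarith
  then obtain R where R: "R \<subseteq> W - {w0}" "card R = k - 2" "finite R"
    by (rule obtain_subset_with_card_n)
  have RV: "R \<subseteq> V" using R W_def by auto
  have nR: "x \<notin> R" "y \<notin> R" "w0 \<notin> R" using R W_def by auto
  have w0V: "w0 \<in> V" "w0 \<noteq> x" "w0 \<noteq> y" using w0 W_def by auto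
  have ck: "\<And>q. q \<notin> R \<Longrightarrow> q \<noteq> w0 \<Longrightarrow> card (insert q (insert w0 R)) = k"
    using R nR k by simp
  have e1: "cutv V E (insert x (insert w0 R)) = c" using cc RV ck nR xy w0V by simp
  have e2: "cutv V E (insert y (insert w0 R)) = c" using cc RV ck nR xy w0V by simp
  note f1 = cut2[OF sg RV, of w0 x] and f2 = cut2[OF sg RV, of w0 y]
  have "(\<Sum>s\<in>R. gi E x s) - (\<Sum>s\<in>R. gi E y s) = (\<Sum>s\<in>R. gi E x s - gi E y s)"
    by (simp add: sum_subtractf)
  also have "\<dots> = (\<Sum>s\<in>R. t)" using tw R by (intro sum.cong) auto
  also have "\<dots> = int (k - 2) * t" using R by simp
  also have "int (k - 2) = int k - 2" using k by simp
  finally have sR: "(\<Sum>s\<in>R. gi E x s) - (\<Sum>s\<in>R. gi E y s) = (int k - 2) * t" .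
  have "(\<Sum>b\<in>V. gi E x b) - (\<Sum>b\<in>V. gi E y b)
      = 2 * ((\<Sum>s\<in>R. gi E x s) - (\<Sum>s\<in>R. gi E y s)) + 2 * (gi E x w0 - gi E y w0)"
    using e1 e2 f1 f2 nR xy w0V by simp
  also have "\<dots> = 2 * (int k - 1) * t" unfolding sR t_def[symmetric] by (simp add: algebra_simps)
  finally have B: "(\<Sum>b\<in>V. gi E x b) - (\<Sum>b\<in>V. gi E y b) = 2 * (int k - 1) * t" .
  show ?thesis using A B tw W_def by blast
qed

lemma structL:
  assumes sg: "simple_graph V E"
    and sw: "\<And>a b w w'. a \<in> V \<Longrightarrow> b \<in> V \<Longrightarrow> w \<in> V \<Longrightarrow> w' \<in> V \<Longrightarrow> a \<noteq> b \<Longrightarrow> a \<noteq> w \<Longrightarrow> a \<noteq> w'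
       \<Longrightarrow> b \<noteq> w \<Longrightarrow> b \<noteq> w' \<Longrightarrow> w \<noteq> w' \<Longrightarrow> gi E a w - gi E b w = gi E a w' - gi E b w'"
    and xy: "x \<in> V" "y \<in> V" "x \<noteq> y"
    and hW: "\<forall>w\<in>V-{x,y}. E x w \<and> \<not> E y w"
  shows "(\<forall>u\<in>V. \<forall>v\<in>V. E u v \<longleftrightarrow> u\<noteq>v \<and> (u=x \<or> v=x))
       \<or> (\<forall>u\<in>V. \<forall>v\<in>V. E u v \<longleftrightarrow> u\<noteq>v \<and> u\<noteq>y \<and> v\<noteq>y)"
proof -
  have sym: "\<And>a b. E a b \<Longrightarrow> E b a" and irr: "\<And>a. \<not> E a a"
    using sg unfolding simple_graph_def by auto
  have hWW: "\<And>w w'. w \<in> V-{x,y} \<Longrightarrow> w' \<in> V-{x,y} \<Longrightarrow> w \<noteq> w' \<Longrightarrow> (E w w' \<longleftrightarrow> \<not> E x y)"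
  proof -
    fix w w' assume w: "w \<in> V-{x,y}" and w': "w' \<in> V-{x,y}" and ne: "w \<noteq> w'"
    have "gi E x y - gi E w y = gi E x w' - gi E w w'"
      using w w' ne xy by (intro sw) auto
    moreover have "gi E w y = 0" using hW w sym unfolding gi_def by auto
    moreover have "gi E x w' = 1" using hW w' unfolding gi_def by auto
    ultimately show "E w w' \<longleftrightarrow> \<not> E x y" unfolding gi_def by (auto split: if_splits)
  qed
  show ?thesis
  proof (cases "E x y")
    case True
    have "\<forall>u\<in>V. \<forall>v\<in>V. E u v \<longleftrightarrow> u\<noteq>v \<and> (u=x \<or> v=x)"
    proof (intro ballI)
      fix u v assume u: "u \<in> V" and v: "v \<in> V"
      show "E u v \<longleftrightarrow> u\<noteq>v \<and> (u=x \<or> v=x)"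
        using hW hWW[of u v] True sym irr u v xy by blast
    qed
    then show ?thesis by blast
  next
    case False
    have "\<forall>u\<in>V. \<forall>v\<in>V. E u v \<longleftrightarrow> u\<noteq>v \<and> u\<noteq>y \<and> v\<noteq>y"
    proof (intro ballI)
      fix u v assume u: "u \<in> V" and v: "v \<in> V"
      show "E u v \<longleftrightarrow> u\<noteq>v \<and> u\<noteq>y \<and> v\<noteq>y"
        using hW hWW[of u v] False sym irr u v xy by blast
    qed
    then show ?thesis by blast
  qed
qed



theorem theorem4:
  fixes V :: "'a set" and E :: "'a \<Rightarrow> 'a \<Rightarrow> bool" and k n :: nat
  assumes "simple_graph V E"
    and "card V = n"
    and "\<not> regular V E"
    and "2 \<le> k" and "k \<le> n - 2"
    and "regular (token_vertices V k) (token_adj E)"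
  shows "(graph_iso V E (star_vertices n) (star_edges n)
          \<or> graph_iso V E (star_vertices n) (compl_graph (star_vertices n) (star_edges n)))
         \<and> 2 * k = n"
proof -
  note sg = assms(1) and cV = assms(2) and k = assms(4) assms(5)
  have fin: "finite V" using sg unfolding simple_graph_def by auto
  obtain d where hd: "\<forall>A\<in>token_vertices V k. degree (token_vertices V k) (token_adj E) A = d"
    using assms(6) unfolding regular_def by blast
  have cc: "\<And>A. A \<subseteq> V \<Longrightarrow> card A = k \<Longrightarrow> cutv V E A = int d"
  proof -
    fix A assume A: "A \<subseteq> V" "card A = k"
    then have "A \<in> token_vertices V k" unfolding token_vertices_def by simp
    then have "degree (token_vertices V k) (token_adj E) A = d" using hd by blast
    then show "cutv V E A = int d" using token_degree[OF sg A] by simp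
  qed
  have n4: "n \<ge> 4" using k by linarith
  have Dg: "\<And>v. int (degree V E v) = (\<Sum>b\<in>V. gi E v b)"
    unfolding degree_def using fin by (rule card_gi)
  obtain x y where xy: "x \<in> V" "y \<in> V" "degree V E x \<noteq> degree V E y"
  proof -
    have "V \<noteq> {}" using n4 cV by auto
    then obtain v where v: "v \<in> V" by blast
    have "\<not> (\<forall>u\<in>V. degree V E u = degree V E v)" using assms(3) unfolding regular_def by blast
    then obtain u where "u \<in> V" "degree V E u \<noteq> degree V E v" by blast
    then show ?thesis using that v by blast
  qed
  have xney: "x \<noteq> y" using xy by auto
  obtain t where t: "\<forall>w\<in>V-{x,y}. gi E x w - gi E y w = t"
     "(\<Sum>b\<in>V. gi E x b) - (\<Sum>b\<in>V. gi E y b) = (int n - 2) * t"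
     "(\<Sum>b\<in>V. gi E x b) - (\<Sum>b\<in>V. gi E y b) = 2 * (int k - 1) * t"
    using pairL[OF sg cV k cc xy(1,2) xney] by blast
  have "(\<Sum>b\<in>V. gi E x b) \<noteq> (\<Sum>b\<in>V. gi E y b)" using Dg[of x] Dg[of y] xy(3) by linarith
  then have t0: "t \<noteq> 0" using t(2) by auto
  have "(int n - 2) * t = (2 * (int k - 1)) * t" using t(2,3) by (simp only:)
  then have "int n - 2 = 2 * (int k - 1)" using t0 mult_right_cancel[OF t0] by blast
  then have nk: "2 * k = n" by simp
  have "V - {x,y} \<noteq> {}"
  proof
    assume "V - {x,y} = {}"
    then have "V \<subseteq> {x,y}" by blast
    then have "card V \<le> card {x,y}" by (rule card_mono[rotated]) simp
    also have "\<dots> \<le> 2" by (simp add: card_insert_le_m1)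
    finally show False using cV n4 by simp
  qed
  then obtain w where w: "w \<in> V - {x,y}" by blast
  have "gi E x w - gi E y w = t" using t(1) w by blast
  then have "t = 1 \<or> t = -1" using t0 gi_01[of E x w] gi_01[of E y w] by auto
  then obtain a b where ab: "a \<in> V" "b \<in> V" "a \<noteq> b" "\<forall>w\<in>V-{a,b}. E a w \<and> \<not> E b w"
  proof
    assume "t = 1"
    then have "\<forall>w\<in>V-{x,y}. E x w \<and> \<not> E y w" using t(1) unfolding gi_def by (auto split: if_splits)
    then show ?thesis using that xy xney by blast
  next
    assume "t = -1"
    then have "\<forall>w\<in>V-{y,x}. E y w \<and> \<not> E x w" using t(1) unfolding gi_def by (auto split: if_splits)
    then show ?thesis using that xy xney by blast
  qed
  have sw: "\<And>a b w w'. a \<in> V \<Longrightarrow> b \<in> V \<Longrightarrow> w \<in> V \<Longrightarrow> w' \<in> V \<Longrightarrow> a \<noteq> b \<Longrightarrow> a \<noteq> w \<Longrightarrow> a \<noteq> w'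
       \<Longrightarrow> b \<noteq> w \<Longrightarrow> b \<noteq> w' \<Longrightarrow> w \<noteq> w' \<Longrightarrow> gi E a w - gi E b w = gi E a w' - gi E b w'"
    by (rule swapB[OF sg cV k cc])
  have "(\<forall>u\<in>V. \<forall>v\<in>V. E u v \<longleftrightarrow> u\<noteq>v \<and> (u=a \<or> v=a))
       \<or> (\<forall>u\<in>V. \<forall>v\<in>V. E u v \<longleftrightarrow> u\<noteq>v \<and> u\<noteq>b \<and> v\<noteq>b)"
    by (rule structL[OF sg sw ab])
  then have "graph_iso V E (star_vertices n) (star_edges n)
          \<or> graph_iso V E (star_vertices n) (compl_graph (star_vertices n) (star_edges n))"
  proof (elim disjE)
    assume "\<forall>u\<in>V. \<forall>v\<in>V. E u v \<longleftrightarrow> u\<noteq>v \<and> (u=a \<or> v=a)"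
    then show ?thesis using iso_star[OF fin cV ab(1)] by (intro disjI1)
  next
    assume "\<forall>u\<in>V. \<forall>v\<in>V. E u v \<longleftrightarrow> u\<noteq>v \<and> u\<noteq>b \<and> v\<noteq>b"
    then show ?thesis using iso_cstar[OF fin cV ab(2)] by (intro disjI2)
  qed
  then show ?thesis using nk by blast
qed

end
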